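(* Let $A=\mathrm{Sym}(\mathrm{Sym}^2(\mathbb{C}^\infty))=\mathbb{C}[x_{i,j}]$ and let $\mathfrak{m}$ be the ideal generated by $x_{i,i}-1$ ($i\ge1$) and $x_{i,j}$ ($i\ne j$). If $I$ is a nonzero $\mathrm{GL}_\infty$-stable ideal of $A$, then $I+\mathfrak{m}=A$.
   Context: $x_{i,j}=e_ie_j$ for the basis $e_1,e_2,\dots$ of $\mathbb{C}^\infty$; $\mathrm{GL}_\infty=\bigcup_n\mathrm{GL}_n$ acts on $A$ via its action on $\mathbb{C}^\infty$. *)

theory Defs
  imports Complex_Main "HOL-Library.Poly_Mapping" "HOL-Library.Uprod"
begin

text \<open>Variables x_{i,j} = e_i e_j (i,j indexed by nat, basis e_0, e_1, ...),
  with x_{i,j} = x_{j,i}: indexed by unordered pairs.\<close>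
type_synonym var = "nat uprod"
type_synonym mono = "var \<Rightarrow>\<^sub>0 nat"
type_synonym poly = "mono \<Rightarrow>\<^sub>0 complex"

definition X :: "nat \<Rightarrow> nat \<Rightarrow> poly" where
  "X i j = Poly_Mapping.single (Poly_Mapping.single (Upair i j) 1) 1"

definition const :: "complex \<Rightarrow> poly" where
  "const c = Poly_Mapping.single 0 c"

definition mono_eval :: "(var \<Rightarrow> poly) \<Rightarrow> mono \<Rightarrow> poly" where
  "mono_eval \<sigma> m = (\<Prod>v\<in>Poly_Mapping.keys m. \<sigma> v ^ Poly_Mapping.lookup m v)"

definition subst :: "(var \<Rightarrow> poly) \<Rightarrow> poly \<Rightarrow> poly" where
  "subst \<sigma> p = (\<Sum>m\<in>Poly_Mapping.keys p. const (Poly_Mapping.lookup p m) * mono_eval \<sigma> m)"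

text \<open>GL_infinity: infinite matrices (g k l = k-th coordinate of g e_l) that are
  the identity outside some n x n block and invertible there.\<close>
definition delta :: "nat \<Rightarrow> nat \<Rightarrow> complex" where
  "delta k l = (if k = l then 1 else 0)"

definition gl_inf :: "(nat \<Rightarrow> nat \<Rightarrow> complex) \<Rightarrow> bool" where
  "gl_inf g \<longleftrightarrow> (\<exists>n h. (\<forall>k l. (n \<le> k \<or> n \<le> l) \<longrightarrow> g k l = delta k l \<and> h k l = delta k l)
      \<and> (\<forall>k<n. \<forall>l<n. (\<Sum>j<n. g k j * h j l) = delta k l)
      \<and> (\<forall>k<n. \<forall>l<n. (\<Sum>j<n. h k j * g j l) = delta k l))"

text \<open>g acting on Sym^2: e_i e_j \<mapsto> (g e_i)(g e_j) = sum_{k,l} g_{k,i} g_{l,j} x_{k,l}.\<close>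
definition act_var :: "(nat \<Rightarrow> nat \<Rightarrow> complex) \<Rightarrow> var \<Rightarrow> poly" where
  "act_var g v = (let i = Min (set_uprod v); j = Max (set_uprod v) in
     (\<Sum>k\<in>{k. g k i \<noteq> 0}. \<Sum>l\<in>{l. g l j \<noteq> 0}. const (g k i * g l j) * X k l))"

definition act :: "(nat \<Rightarrow> nat \<Rightarrow> complex) \<Rightarrow> poly \<Rightarrow> poly" where
  "act g p = subst (act_var g) p"

definition is_ideal :: "poly set \<Rightarrow> bool" where
  "is_ideal I \<longleftrightarrow> 0 \<in> I \<and> (\<forall>a\<in>I. \<forall>b\<in>I. a + b \<in> I) \<and> (\<forall>r. \<forall>a\<in>I. r * a \<in> I)"

definition ideal_gen :: "poly set \<Rightarrow> poly set" where
  "ideal_gen S = \<Inter>{I. is_ideal I \<and> S \<subseteq> I}"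

definition mm :: "poly set" where
  "mm = ideal_gen ({X i i - 1 | i. True} \<union> {X i j | i j. i \<noteq> j})"

definition GL_stable :: "poly set \<Rightarrow> bool" where
  "GL_stable I \<longleftrightarrow> (\<forall>g. gl_inf g \<longrightarrow> (\<forall>p\<in>I. act g p \<in> I))"

end

theory Submission
  imports Defs
begin


abbreviation lk where "lk \<equiv> Poly_Mapping.lookup"
abbreviation ks where "ks \<equiv> Poly_Mapping.keys"
abbreviation sg where "sg \<equiv> Poly_Mapping.single"

definition mev :: "(var \<Rightarrow> complex) \<Rightarrow> mono \<Rightarrow> complex" where
  "mev a m = (\<Prod>v\<in>ks m. a v ^ lk m v)"

definition ev :: "(var \<Rightarrow> complex) \<Rightarrow> poly \<Rightarrow> complex" where
  "ev a p = (\<Sum>m\<in>ks p. lk p m * mev a m)"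

lemma mev_superset: "finite S \<Longrightarrow> ks m \<subseteq> S \<Longrightarrow> mev a m = (\<Prod>v\<in>S. a v ^ lk m v)"
  unfolding mev_def
  by (rule prod.mono_neutral_left) (auto simp: in_keys_iff)

lemma ev_superset: "finite S \<Longrightarrow> ks p \<subseteq> S \<Longrightarrow> ev a p = (\<Sum>m\<in>S. lk p m * mev a m)"
  unfolding ev_def
  by (rule sum.mono_neutral_left) (auto simp: in_keys_iff)

lemma mev_add: "mev a (m1 + m2) = mev a m1 * mev a m2"
proof -
  let ?S = "ks m1 \<union> ks m2"
  have "mev a (m1 + m2) = (\<Prod>v\<in>?S. a v ^ lk (m1+m2) v)"
    by (rule mev_superset) (auto dest: subsetD[OF keys_add])
  also have "\<dots> = (\<Prod>v\<in>?S. a v ^ lk m1 v) * (\<Prod>v\<in>?S. a v ^ lk m2 v)"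
    by (simp add: lookup_add power_add prod.distrib)
  also have "\<dots> = mev a m1 * mev a m2"
    by (simp add: mev_superset[of ?S])
  finally show ?thesis .
qed

lemma mev_zero[simp]: "mev a 0 = 1" by (simp add: mev_def)

lemma mev_single: "mev a (sg v k) = a v ^ k"
  by (simp add: mev_def)

lemma ev_add: "ev a (p + q) = ev a p + ev a q"
proof -
  let ?S = "ks p \<union> ks q"
  have "ev a (p + q) = (\<Sum>m\<in>?S. lk (p+q) m * mev a m)"
    by (rule ev_superset) (auto dest: subsetD[OF keys_add])
  also have "\<dots> = (\<Sum>m\<in>?S. lk p m * mev a m) + (\<Sum>m\<in>?S. lk q m * mev a m)"
    by (simp add: lookup_add distrib_right sum.distrib)
  also have "\<dots> = ev a p + ev a q"
    by (simp add: ev_superset[of ?S])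
  finally show ?thesis .
qed

lemma ev_zero[simp]: "ev a 0 = 0" by (simp add: ev_def)

lemma ev_uminus: "ev a (- p) = - ev a p"
  using ev_add[of a p "-p"] by (simp add: eq_neg_iff_add_eq_0 add.commute)

lemma ev_diff: "ev a (p - q) = ev a p - ev a q"
  using ev_add[of a p "-q"] by (simp add: ev_uminus)

lemma ev_single: "ev a (sg m c) = c * mev a m"
  by (simp add: ev_def)

lemma ev_sum: "ev a (sum f A) = (\<Sum>x\<in>A. ev a (f x))"
  by (induction A rule: infinite_finite_induct) (auto simp: ev_add)

lemma poly_expand: "(p::'x \<Rightarrow>\<^sub>0 'y::comm_monoid_add) = (\<Sum>m\<in>ks p. sg m (lk p m))"
proof (rule poly_mapping_eqI)
  fix k
  show "lk p k = lk (\<Sum>m\<in>ks p. sg m (lk p m)) k"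
    unfolding lookup_sum lookup_single
    by (cases "k \<in> ks p") (auto simp: when_def in_keys_iff sum.delta)
qed

lemma ev_mult: "ev a (p * q) = ev a p * ev a q"
proof -
  have "p * q = (\<Sum>m\<in>ks p. sg m (lk p m)) * (\<Sum>m\<in>ks q. sg m (lk q m))"
    using poly_expand[of p] poly_expand[of q] by simp
  also have "\<dots> = (\<Sum>m\<in>ks p. \<Sum>m'\<in>ks q. sg (m+m') (lk p m * lk q m'))"
    by (simp add: sum_product mult_single)
  finally have "ev a (p*q) = (\<Sum>m\<in>ks p. \<Sum>m'\<in>ks q. (lk p m * lk q m') * mev a (m+m'))"
    by (simp add: ev_sum ev_single)
  also have "\<dots> = (\<Sum>m\<in>ks p. lk p m * mev a m) * (\<Sum>m'\<in>ks q. lk q m' * mev a m')"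
    by (simp add: sum_product mev_add mult_ac)
  finally show ?thesis by (simp add: ev_def)
qed

lemma ev_one[simp]: "ev a 1 = 1"
  by (metis ev_single mev_zero mult_1 single_one)

lemma ev_const[simp]: "ev a (const c) = c"
  by (simp add: const_def ev_single)

lemma ev_X[simp]: "ev a (X i j) = a (Upair i j)"
  by (simp add: X_def ev_single mev_single)

lemma ev_prod: "ev a (prod f A) = (\<Prod>x\<in>A. ev a (f x))"
  by (induction A rule: infinite_finite_induct) (auto simp: ev_mult)

lemma ev_power: "ev a (p ^ n) = ev a p ^ n"
  by (induction n) (auto simp: ev_mult)

lemma ev_subst: "ev a (subst \<sigma> p) = ev (\<lambda>v. ev a (\<sigma> v)) p"
  unfolding subst_def
  by (simp add: ev_sum ev_mult mono_eval_def ev_prod ev_power mev_def ev_def[of _ p])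




definition vars :: "poly \<Rightarrow> var set" where "vars p = \<Union>(ks ` ks p)"

lemma finite_vars: "finite (vars p)" by (simp add: vars_def)

lemma ev_local: "(\<And>v. v \<in> vars p \<Longrightarrow> a v = b v) \<Longrightarrow> ev a p = ev b p"
  unfolding ev_def mev_def vars_def
  by (force intro!: sum.cong prod.cong)

lemma is_ideal_gen: "is_ideal (ideal_gen S)"
  unfolding ideal_gen_def is_ideal_def by auto

lemma ideal_gen_sub: "S \<subseteq> ideal_gen S"
  unfolding ideal_gen_def by auto

lemma ideal_mult: "is_ideal I \<Longrightarrow> a \<in> I \<Longrightarrow> r * a \<in> I"
  unfolding is_ideal_def by auto
lemma ideal_add: "is_ideal I \<Longrightarrow> a \<in> I \<Longrightarrow> b \<in> I \<Longrightarrow> a + b \<in> I"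
  unfolding is_ideal_def by auto

lemma mm_ideal: "is_ideal mm" by (simp add: mm_def is_ideal_gen)

definition idp :: "var \<Rightarrow> complex" where
  "idp v = (if \<exists>i. v = Upair i i then 1 else 0)"

lemma idp_Upair[simp]: "idp (Upair i j) = delta i j"
  by (auto simp: idp_def delta_def)

definition J :: "poly set" where "J = {p. p - const (ev idp p) \<in> mm}"

lemma const_mult: "const a * const b = const (a * b)"
  by (simp add: const_def mult_single)

lemma const_zero[simp]: "const 0 = 0" by (simp add: const_def)
lemma const_one[simp]: "const 1 = 1" by (simp add: const_def)

lemma const_add: "const a + const b = const (a + b)"
  by (simp add: const_def single_add)

lemma J_mult: "p \<in> J \<Longrightarrow> q \<in> J \<Longrightarrow> p * q \<in> J"
proof -
  assume p: "p \<in> J" and q: "q \<in> J"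
  let ?a = "ev idp p" and ?b = "ev idp q"
  have "p * q - const (ev idp (p*q)) = p * (q - const ?b) + const ?b * (p - const ?a)"
    by (simp add: ev_mult const_mult[symmetric] algebra_simps)
  also have "\<dots> \<in> mm"
    using p q by (intro ideal_add ideal_mult mm_ideal) (auto simp: J_def)
  finally show ?thesis by (simp add: J_def)
qed

lemma J_add: "p \<in> J \<Longrightarrow> q \<in> J \<Longrightarrow> p + q \<in> J"
proof -
  assume p: "p \<in> J" and q: "q \<in> J"
  have "p + q - const (ev idp (p+q)) = (p - const (ev idp p)) + (q - const (ev idp q))"
    by (simp add: ev_add const_add[symmetric] algebra_simps)
  also have "\<dots> \<in> mm"
    using p q by (intro ideal_add mm_ideal) (auto simp: J_def)
  finally show ?thesis by (simp add: J_def)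
qed

lemma J_zero: "0 \<in> J"
  using mm_ideal by (simp add: J_def const_def is_ideal_def)

lemma J_sum: "(\<And>x. x \<in> A \<Longrightarrow> f x \<in> J) \<Longrightarrow> sum f A \<in> J"
  by (induction A rule: infinite_finite_induct) (auto simp: J_zero J_add)

lemma J_one: "1 \<in> J"
  using mm_ideal by (simp add: J_def is_ideal_def)

lemma J_prod: "(\<And>x. x \<in> A \<Longrightarrow> f x \<in> J) \<Longrightarrow> prod f A \<in> J"
  by (induction A rule: infinite_finite_induct) (auto simp: J_one J_mult)

lemma J_power: "p \<in> J \<Longrightarrow> p ^ n \<in> J"
  by (induction n) (auto simp: J_one J_mult)

lemma J_const: "const c \<in> J"
  using J_zero by (simp add: J_def)

lemma J_X: "X i j \<in> J"
proof (cases "i = j")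
  case True
  have "X i i - 1 \<in> mm" unfolding mm_def by (rule subsetD[OF ideal_gen_sub]) auto
  then show ?thesis using True by (simp add: J_def delta_def const_def)
next
  case False
  have "X i j \<in> mm" unfolding mm_def using False by (intro subsetD[OF ideal_gen_sub]) auto
  then show ?thesis using False by (simp add: J_def delta_def const_def)
qed

lemma sg_pow: "(sg (sg v 1) (1::complex)) ^ n = sg (sg v n) 1"
  by (induction n) (auto simp: mult_single single_add[symmetric])

lemma sg_prod: "(\<Prod>x\<in>A. sg (f x) (1::complex)) = sg (\<Sum>x\<in>A. f x) 1"
  by (induction A rule: infinite_finite_induct) (auto simp: mult_single)


lemma J_all: "p \<in> J"
proof -
  have mono: "sg m (1::complex) \<in> J" for m :: mono
  proof -
    have "(\<Prod>v\<in>ks m. (sg (sg v 1) (1::complex)) ^ lk m v) = (\<Prod>v\<in>ks m. sg (sg v (lk m v)) 1)"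
      by (simp only: sg_pow)
    also have "\<dots> = sg m 1"
      by (simp only: sg_prod poly_expand[of m, symmetric])
    finally have "sg m (1::complex) = (\<Prod>v\<in>ks m. (sg (sg v 1) 1) ^ lk m v)" by simp
    also have "\<dots> \<in> J"
    proof (intro J_prod J_power)
      fix v :: var
      obtain i j where "v = Upair i j" by (cases v)
      then show "sg (sg v 1) 1 \<in> J" using J_X[of i j] by (simp add: X_def)
    qed
    finally show ?thesis .
  qed
  have "p = (\<Sum>m\<in>ks p. const (lk p m) * sg m 1)"
    by (subst poly_expand) (simp add: const_def mult_single)
  also have "\<dots> \<in> J" by (intro J_sum J_mult J_const mono)
  finally show ?thesis .
qed




lemma sum_ext_N:
  assumes "{k. (f::nat\<Rightarrow>complex) k \<noteq> 0} \<subseteq> {..<N}"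
  shows "(\<Sum>k\<in>{k. f k \<noteq> 0}. f k * h k) = (\<Sum>k<N. f k * h k)"
  by (rule sum.mono_neutral_left) (use assms in auto)

lemma ev_act_var:
  assumes "{k. g k i \<noteq> 0} \<subseteq> {..<N}" "{k. g k j \<noteq> 0} \<subseteq> {..<N}"
  shows "ev idp (act_var g (Upair i j)) = (\<Sum>k<N. g k i * g k j)"
proof -
  have gen: "ev idp (\<Sum>k\<in>{k. g k a \<noteq> 0}. \<Sum>l\<in>{l. g l b \<noteq> 0}. const (g k a * g l b) * X k l)
      = (\<Sum>k<N. g k a * g k b)"
    if A: "{k. g k a \<noteq> 0} \<subseteq> {..<N}" and B: "{k. g k b \<noteq> 0} \<subseteq> {..<N}" for a b
  proof -
    have "ev idp (\<Sum>k\<in>{k. g k a \<noteq> 0}. \<Sum>l\<in>{l. g l b \<noteq> 0}. const (g k a * g l b) * X k l)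
        = (\<Sum>k\<in>{k. g k a \<noteq> 0}. g k a * (\<Sum>l\<in>{l. g l b \<noteq> 0}. g l b * delta k l))"
      by (simp add: ev_sum ev_mult sum_distrib_left mult_ac)
    also have "\<dots> = (\<Sum>k\<in>{k. g k a \<noteq> 0}. g k a * (\<Sum>l<N. g l b * delta k l))"
      using B by (simp add: sum_ext_N)
    also have "\<dots> = (\<Sum>k\<in>{k. g k a \<noteq> 0}. g k a * g k b)"
    proof (intro sum.cong refl arg_cong[where f="(*) _"])
      fix x assume "x \<in> {k. g k a \<noteq> 0}"
      then have "x < N" using A by auto
      then show "(\<Sum>l<N. g l b * delta x l) = g x b"
        by (simp add: delta_def if_distrib[of "(*) _"] sum.delta cong: if_cong)
    qed
    also have "\<dots> = (\<Sum>k<N. g k a * g k b)"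
      using A by (simp add: sum_ext_N)
    finally show ?thesis .
  qed
  show ?thesis
  proof (cases "i \<le> j")
    case True
    then have "Min (set_uprod (Upair i j)) = i" "Max (set_uprod (Upair i j)) = j"
      by (auto simp: min_def max_def)
    then show ?thesis using gen[OF assms] by (simp add: act_var_def)
  next
    case False
    then have "Min (set_uprod (Upair i j)) = j" "Max (set_uprod (Upair i j)) = i"
      by (auto simp: min_def max_def)
    then show ?thesis using gen[OF assms(2,1)] by (simp add: act_var_def mult.commute)
  qed
qed

lemma ev_act:
  assumes "\<And>i j. Upair i j \<in> vars p \<Longrightarrow> {k. g k i \<noteq> 0} \<subseteq> {..<N} \<and> {k. g k j \<noteq> 0} \<subseteq> {..<N}"
    and "\<And>i j. Upair i j \<in> vars p \<Longrightarrow> a (Upair i j) = (\<Sum>k<N. g k i * g k j)"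
  shows "ev idp (act g p) = ev a p"
  unfolding act_def ev_subst
proof (rule ev_local)
  fix v assume "v \<in> vars p"
  moreover obtain i j where v: "v = Upair i j" by (cases v)
  ultimately show "ev idp (act_var g v) = a v"
    using assms ev_act_var by auto
qed




definition cf :: "var \<Rightarrow> nat \<Rightarrow> poly \<Rightarrow> poly" where
  "cf v k p = (\<Sum>m\<in>{m\<in>ks p. lk m v = k}. sg (m - sg v k) (lk p m))"

lemma split_mono: "lk m v = k \<Longrightarrow> (m - sg v k) + sg v k = (m::mono)"
  by (rule poly_mapping_eqI) (auto simp: lookup_add lookup_minus lookup_single when_def)

lemma ev_cf_expand:
  assumes D: "\<And>m. m \<in> ks p \<Longrightarrow> lk m v \<le> D"
  shows "ev a p = (\<Sum>i\<le>D. ev a (cf v i p) * a v ^ i)"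
proof -
  have "ev a p = (\<Sum>m\<in>ks p. lk p m * mev a m)" by (simp add: ev_def)
  also have "\<dots> = (\<Sum>i\<le>D. \<Sum>m\<in>{m\<in>ks p. lk m v = i}. lk p m * mev a m)"
    by (rule sum.group[symmetric]) (use D in auto)
  also have "\<dots> = (\<Sum>i\<le>D. ev a (cf v i p) * a v ^ i)"
  proof (rule sum.cong[OF refl])
    fix i
    have "(\<Sum>m\<in>{m\<in>ks p. lk m v = i}. lk p m * mev a m)
        = (\<Sum>m\<in>{m\<in>ks p. lk m v = i}. lk p m * mev a (m - sg v i) * a v ^ i)"
    proof (rule sum.cong[OF refl])
      fix m assume "m \<in> {m\<in>ks p. lk m v = i}"
      then have "mev a m = mev a ((m - sg v i) + sg v i)" by (simp add: split_mono)
      then show "lk p m * mev a m = lk p m * mev a (m - sg v i) * a v ^ i"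
        by (simp add: mev_add mev_single)
    qed
    also have "\<dots> = ev a (cf v i p) * a v ^ i"
      by (simp add: cf_def ev_sum ev_single sum_distrib_right)
    finally show "(\<Sum>m\<in>{m\<in>ks p. lk m v = i}. lk p m * mev a m) = ev a (cf v i p) * a v ^ i" .
  qed
  finally show ?thesis .
qed

lemma vars_cf: "vars (cf v k p) \<subseteq> vars p - {v}"
proof
  fix w assume "w \<in> vars (cf v k p)"
  then obtain m' where m': "m' \<in> ks (cf v k p)" "w \<in> ks m'" unfolding vars_def by blast
  have "m' \<in> (\<Union>m\<in>{m\<in>ks p. lk m v = k}. ks (sg (m - sg v k) (lk p m)))"
    using subsetD[OF keys_sum m'(1)[unfolded cf_def]] .
  then obtain m where m: "m \<in> ks p" "lk m v = k" "m' \<in> ks (sg (m - sg v k) (lk p m))" by blast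
  then have mm: "m' = m - sg v k" by (simp split: if_splits)
  have "lk m' w \<noteq> 0" using m'(2) by (simp add: in_keys_iff)
  then have "w \<noteq> v" "lk m w \<noteq> 0" using m(2) unfolding mm lookup_minus lookup_single
    by (auto simp: when_def split: if_splits)
  then show "w \<in> vars p - {v}" using m(1) unfolding vars_def by (auto simp: in_keys_iff)
qed

lemma cf_nonzero:
  assumes "p \<noteq> 0" shows "\<exists>k. cf v k p \<noteq> 0"
proof -
  obtain m0 where m0: "m0 \<in> ks p" using assms by (metis all_not_in_conv keys_eq_empty)
  let ?k = "lk m0 v"
  have "lk (cf v ?k p) (m0 - sg v ?k) = (\<Sum>m\<in>{m\<in>ks p. lk m v = ?k}. (lk p m when m = m0))"
  proof -
    have eq: "(m - sg v ?k = m0 - sg v ?k) = (m = m0)"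
      if "m \<in> {m\<in>ks p. lk m v = ?k}" for m
      using that split_mono[of m v ?k] split_mono[of m0 v ?k] by (metis (mono_tags, lifting) mem_Collect_eq)
    show ?thesis
      unfolding cf_def lookup_sum lookup_single by (rule sum.cong[OF refl]) (simp only: eq)
  qed
  also have "\<dots> = lk p m0" using m0 by (simp add: when_def)
  finally have "cf v ?k p \<noteq> 0" using m0 by (auto simp: in_keys_iff)
  then show ?thesis by blast
qed

lemma cf_zero_big:
  assumes "\<And>m. m \<in> ks p \<Longrightarrow> lk m v \<le> D" "k > D"
  shows "cf v k p = 0"
proof -
  have "{m\<in>ks p. lk m v = k} = {}" using assms by force
  then show ?thesis unfolding cf_def by (metis sum.empty)
qed

lemma vars_empty_ev:
  assumes "vars p = {}" shows "ev a p = lk p 0"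
proof -
  have "ks p \<subseteq> {0}"
  proof
    fix m assume "m \<in> ks p"
    then have "ks m = {}" using assms by (auto simp: vars_def)
    then show "m \<in> {0}" by simp
  qed
  then show ?thesis by (simp add: ev_superset[of "{0}"])
qed

lemma vars_empty_nonzero:
  assumes "vars p = {}" "p \<noteq> 0" shows "lk p 0 \<noteq> 0"
proof -
  obtain m where m: "m \<in> ks p" using assms by (metis all_not_in_conv keys_eq_empty)
  then have "ks m = {}" using assms by (auto simp: vars_def)
  then have "m = 0" by simp
  with m show ?thesis by (simp add: in_keys_iff)
qed




lemma git:
  fixes forb :: "var \<Rightarrow> (var \<Rightarrow> complex) \<Rightarrow> complex set"
  shows "distinct vs \<Longrightarrow> (\<And>v a. finite (forb v a)) \<Longrightarrow>
   (\<And>us v ws a b. vs = us @ v # ws \<Longrightarrow> (\<And>w. w \<in> set us \<Longrightarrow> a w = b w) \<Longrightarrow> forb v a = forb v b) \<Longrightarrow>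
   vars p \<subseteq> set vs \<Longrightarrow> p \<noteq> 0 \<Longrightarrow> \<exists>a. ev a p \<noteq> 0 \<and> (\<forall>v\<in>set vs. a v \<notin> forb v a)"
proof (induction vs arbitrary: p rule: rev_induct)
  case Nil
  then have "vars p = {}" by simp
  then show ?case using vars_empty_ev vars_empty_nonzero Nil.prems(5) by auto
next
  case (snoc v vs)
  note dist0 = snoc.prems(1) and finF = snoc.prems(2) and depF = snoc.prems(3)
    and vp = snoc.prems(4) and pnz = snoc.prems(5)
  have dist: "distinct vs" "v \<notin> set vs" using dist0 by auto
  have dep: "forb w a = forb w b" if "vs = us @ w # ws" "\<And>x. x \<in> set us \<Longrightarrow> a x = b x" for us w ws a b
  proof -
    have "vs @ [v] = us @ w # (ws @ [v])" using that(1) by simp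
    then show ?thesis by (rule depF) (rule that(2))
  qed
  define D where "D = Max (insert 0 ((\<lambda>m. lk m v) ` ks p))"
  have Dle: "\<And>m. m \<in> ks p \<Longrightarrow> lk m v \<le> D" unfolding D_def by (auto intro: Max_ge)
  obtain k where k: "cf v k p \<noteq> 0" using cf_nonzero[OF pnz] by blast
  have kD: "k \<le> D" using cf_zero_big[OF Dle] k by (meson not_le)
  have vk: "vars (cf v k p) \<subseteq> set vs" using vars_cf[of v k p] vp by auto
  have "\<exists>a. ev a (cf v k p) \<noteq> 0 \<and> (\<forall>w\<in>set vs. a w \<notin> forb w a)"
  proof (rule snoc.IH)
    show "distinct vs" by (rule dist(1))
    show "\<And>v a. finite (forb v a)" by (rule finF)
    show "\<And>us w ws a b. vs = us @ w # ws \<Longrightarrow> (\<And>x. x \<in> set us \<Longrightarrow> a x = b x) \<Longrightarrow> forb w a = forb w b"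
      by (rule dep)
  qed (use vk k in auto)
  then obtain a0 where a0: "ev a0 (cf v k p) \<noteq> 0" "\<forall>w\<in>set vs. a0 w \<notin> forb w a0"
    by blast
  define c where "c i = ev a0 (cf v i p)" for i
  have ck: "c k \<noteq> 0" using a0(1) by (simp add: c_def)
  have fin: "finite {z. (\<Sum>i\<le>D. c i * z^i) = 0}"
    by (rule polyfun_roots_finite[of c k, OF ck kD])
  have "finite ({z. (\<Sum>i\<le>D. c i * z^i) = 0} \<union> forb v a0)" using fin finF by simp
  then obtain t where t: "t \<notin> {z. (\<Sum>i\<le>D. c i * z^i) = 0} \<union> forb v a0"
    using ex_new_if_finite[OF infinite_UNIV_char_0] by blast
  define a where "a = a0(v := t)"
  have agree: "ev a (cf v i p) = c i" for i
  proof -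
    have "\<And>w. w \<in> vars (cf v i p) \<Longrightarrow> a w = a0 w" using vars_cf[of v i p] unfolding a_def by auto
    then show ?thesis unfolding c_def by (rule ev_local)
  qed
  have "ev a p = (\<Sum>i\<le>D. c i * t ^ i)"
    using ev_cf_expand[OF Dle, where a=a] agree by (simp add: a_def)
  then have "ev a p \<noteq> 0" using t by auto
  moreover have "\<forall>w\<in>set (vs @ [v]). a w \<notin> forb w a"
  proof
    fix w assume "w \<in> set (vs @ [v])"
    then consider "w \<in> set vs" | "w = v" by auto
    then show "a w \<notin> forb w a"
    proof cases
      case 1
      then obtain us ws where us: "vs = us @ w # ws" by (meson split_list)
      have vus: "v \<notin> set us" using us dist(2) by auto
      have "forb w a = forb w a0"
      proof (rule depF)
        show "vs @ [v] = us @ w # (ws @ [v])" using us by simp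
        fix x assume "x \<in> set us" then show "a x = a0 x" using vus unfolding a_def by auto
      qed
      moreover have "a w = a0 w" using 1 dist(2) unfolding a_def by auto
      ultimately show ?thesis using a0(2) 1 by simp
    next
      case 2
      have "forb v a = forb v a0"
      proof (rule depF)
        show "vs @ [v] = vs @ v # []" by simp
        fix x assume "x \<in> set vs" then show "a x = a0 x" using dist(2) unfolding a_def by auto
      qed
      then show ?thesis using t 2 by (simp add: a_def)
    qed
  qed
  ultimately show ?case by blast
qed




type_synonym mat = "nat \<Rightarrow> nat \<Rightarrow> complex"

definition cvec :: "nat \<Rightarrow> (var \<Rightarrow> complex) \<Rightarrow> mat \<Rightarrow> nat \<Rightarrow> complex" where
  "cvec n a h m = (\<Sum>k<n. h k m * a (Upair k n))"

definition dval :: "nat \<Rightarrow> (var \<Rightarrow> complex) \<Rightarrow> mat \<Rightarrow> complex" where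
  "dval n a h = csqrt (a (Upair n n) - (\<Sum>m<n. (cvec n a h m)\<^sup>2))"

definition stepg :: "nat \<Rightarrow> (var \<Rightarrow> complex) \<Rightarrow> mat \<Rightarrow> mat \<Rightarrow> mat" where
  "stepg n a g h = (\<lambda>k l. if l = n \<and> k < n then cvec n a h k else if k = n \<and> l = n then dval n a h else g k l)"

definition steph :: "nat \<Rightarrow> (var \<Rightarrow> complex) \<Rightarrow> mat \<Rightarrow> mat" where
  "steph n a h = (\<lambda>k l. if l = n \<and> k < n then - (\<Sum>m<n. h k m * cvec n a h m) / dval n a h
      else if k = n \<and> l = n then 1 / dval n a h else h k l)"

fun chol :: "nat \<Rightarrow> (var \<Rightarrow> complex) \<Rightarrow> mat \<times> mat" where
  "chol 0 a = (delta, delta)"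
| "chol (Suc n) a = (stepg n a (fst (chol n a)) (snd (chol n a)), steph n a (snd (chol n a)))"

definition phi :: "nat \<Rightarrow> (var \<Rightarrow> complex) \<Rightarrow> complex" where
  "phi n a = (\<Sum>m<n. (cvec n a (snd (chol n a)) m)\<^sup>2)"

definition chinv :: "nat \<Rightarrow> (var \<Rightarrow> complex) \<Rightarrow> mat \<Rightarrow> mat \<Rightarrow> bool" where
  "chinv n a g h \<longleftrightarrow> (\<forall>k l. (n \<le> k \<or> n \<le> l) \<longrightarrow> g k l = delta k l \<and> h k l = delta k l)
     \<and> (\<forall>k<n. \<forall>l<n. (\<Sum>j<n. g k j * h j l) = delta k l)
     \<and> (\<forall>k<n. \<forall>l<n. (\<Sum>j<n. h k j * g j l) = delta k l)
     \<and> (\<forall>i<n. \<forall>j<n. (\<Sum>k<n. g k i * g k j) = a (Upair i j))"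

lemma swapA: fixes g h :: "nat\<Rightarrow>nat\<Rightarrow>complex" shows
 "(\<Sum>j<n. g k j * (- (\<Sum>m<n. h j m * c m) / d)) = - (\<Sum>m<n. (\<Sum>j<n. g k j * h j m) * c m) / d"
proof -
  have "(\<Sum>j<n. g k j * (- (\<Sum>m<n. h j m * c m) / d)) = (\<Sum>j<n. (\<Sum>m<n. g k j * h j m * c m) * (-1/d))"
    by (rule sum.cong[OF refl]) (simp add: sum_distrib_left mult.assoc)
  also have "\<dots> = (\<Sum>j<n. \<Sum>m<n. g k j * h j m * c m) * (-1/d)"
    by (simp only: sum_distrib_right)
  also have "(\<Sum>j<n. \<Sum>m<n. g k j * h j m * c m) = (\<Sum>m<n. \<Sum>j<n. g k j * h j m * c m)"
    by (rule sum.swap)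
  also have "\<dots> = (\<Sum>m<n. (\<Sum>j<n. g k j * h j m) * c m)"
    by (simp add: sum_distrib_right)
  finally show ?thesis by simp
qed
lemma swapB: fixes g h :: "nat\<Rightarrow>nat\<Rightarrow>complex" shows
 "(\<Sum>k<n. g k i * (\<Sum>m<n. h m k * b m)) = (\<Sum>m<n. (\<Sum>k<n. h m k * g k i) * b m)"
proof -
  have "(\<Sum>k<n. g k i * (\<Sum>m<n. h m k * b m)) = (\<Sum>k<n. \<Sum>m<n. h m k * g k i * b m)"
    by (rule sum.cong[OF refl]) (simp add: sum_distrib_left mult_ac)
  also have "\<dots> = (\<Sum>m<n. \<Sum>k<n. h m k * g k i * b m)"
    by (rule sum.swap)
  also have "\<dots> = (\<Sum>m<n. (\<Sum>k<n. h m k * g k i) * b m)"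
    by (simp add: sum_distrib_right)
  finally show ?thesis .
qed

lemma chinv_step:
  assumes I: "chinv n a g h" and good: "a (Upair n n) \<noteq> (\<Sum>m<n. (cvec n a h m)\<^sup>2)"
  shows "chinv (Suc n) a (stepg n a g h) (steph n a h)"
proof -
  define c where "c = cvec n a h"
  define d where "d = dval n a h"
  have dsq: "d\<^sup>2 = a (Upair n n) - (\<Sum>m<n. (c m)\<^sup>2)" by (simp add: d_def dval_def c_def)
  have dnz: "d \<noteq> 0" using good dsq by (auto simp: c_def)
  define G where "G = stepg n a g h"
  define H where "H = steph n a h"
  have G: "G k l = (if l = n \<and> k < n then c k else if k = n \<and> l = n then d else g k l)" for k l
    by (simp add: G_def stepg_def c_def d_def)
  have H: "H k l = (if l = n \<and> k < n then - (\<Sum>m<n. h k m * c m) / d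
      else if k = n \<and> l = n then 1 / d else h k l)" for k l
    by (simp add: H_def steph_def c_def d_def)
  have out: "g k l = delta k l" "h k l = delta k l" if "n \<le> k \<or> n \<le> l" for k l
    using I that by (auto simp: chinv_def)
  have gh: "(\<Sum>j<n. g k j * h j l) = delta k l" if "k < n" "l < n" for k l
    using I that by (auto simp: chinv_def)
  have hg: "(\<Sum>j<n. h k j * g j l) = delta k l" if "k < n" "l < n" for k l
    using I that by (auto simp: chinv_def)
  have gg: "(\<Sum>k<n. g k i * g k j) = a (Upair i j)" if "i < n" "j < n" for i j
    using I that by (auto simp: chinv_def)
  have Gin: "G k l = g k l" "H k l = h k l" if "k < n" "l < n" for k l
    using that by (auto simp: G H)
  have Gn0: "G n l = 0" "H n l = 0" if "l < n" for l
    using that out[of n l] by (auto simp: G H delta_def)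
  have Gcol: "G k n = c k" "H k n = - (\<Sum>m<n. h k m * c m) / d" if "k < n" for k
    using that by (auto simp: G H)
  have Gnn: "G n n = d" "H n n = 1 / d" by (auto simp: G H)
  have P1: "\<forall>k l. (Suc n \<le> k \<or> Suc n \<le> l) \<longrightarrow> G k l = delta k l \<and> H k l = delta k l"
    using out by (auto simp: G H)
  have P2: "(\<Sum>j<Suc n. G k j * H j l) = delta k l" if kl: "k < Suc n" "l < Suc n" for k l
  proof -
    consider "k < n" "l < n" | "k < n" "l = n" | "k = n" "l < n" | "k = n" "l = n"
      using kl by (auto simp: less_Suc_eq)
    then show ?thesis
    proof cases
      case 1
      have "(\<Sum>j<n. G k j * H j l) = (\<Sum>j<n. g k j * h j l)" using 1 by (simp add: Gin)
      then show ?thesis using 1 gh Gn0 by simp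
    next
      case 2
      have "(\<Sum>j<n. G k j * H j n) = (\<Sum>j<n. g k j * (- (\<Sum>m<n. h j m * c m) / d))"
        using 2 by (simp add: Gin Gcol)
      also have "\<dots> = - (\<Sum>m<n. (\<Sum>j<n. g k j * h j m) * c m) / d"
        by (rule swapA)
      also have "\<dots> = - (\<Sum>m<n. delta k m * c m) / d"
        using 2 gh by simp
      also have "\<dots> = - c k / d"
        using 2 by (simp add: delta_def if_distrib[of "\<lambda>x. x * _"] sum.delta cong: if_cong)
      finally show ?thesis using 2 dnz by (simp add: Gcol Gnn delta_def)
    next
      case 3
      then show ?thesis using Gn0 Gnn by (simp add: delta_def)
    next
      case 4
      then show ?thesis using Gn0 Gnn dnz by (simp add: delta_def)
    qed
  qed
  have P3: "(\<Sum>j<Suc n. H k j * G j l) = delta k l" if kl: "k < Suc n" "l < Suc n" for k l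
  proof -
    consider "k < n" "l < n" | "k < n" "l = n" | "k = n" "l < n" | "k = n" "l = n"
      using kl by (auto simp: less_Suc_eq)
    then show ?thesis
    proof cases
      case 1
      have "(\<Sum>j<n. H k j * G j l) = (\<Sum>j<n. h k j * g j l)" using 1 by (simp add: Gin)
      then show ?thesis using 1 hg Gn0 by simp
    next
      case 2
      have "(\<Sum>j<n. H k j * G j n) = (\<Sum>j<n. h k j * c j)"
        using 2 by (simp add: Gin Gcol)
      then show ?thesis using 2 dnz by (simp add: Gcol Gnn delta_def)
    next
      case 3
      then show ?thesis using Gn0 Gnn by (simp add: delta_def)
    next
      case 4
      then show ?thesis using Gn0 Gnn dnz by (simp add: delta_def)
    qed
  qed
  have colc: "(\<Sum>k<n. g k i * c k) = a (Upair i n)" if "i < n" for i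
  proof -
    have "(\<Sum>k<n. g k i * c k) = (\<Sum>m<n. (\<Sum>k<n. h m k * g k i) * a (Upair m n))"
      unfolding c_def cvec_def by (rule swapB)
    also have "\<dots> = (\<Sum>m<n. delta m i * a (Upair m n))"
      using that hg by simp
    also have "\<dots> = a (Upair i n)"
      using that by (simp add: delta_def if_distrib[of "\<lambda>x. x * _"] sum.delta cong: if_cong)
    finally show ?thesis .
  qed
  have P4: "(\<Sum>k<Suc n. G k i * G k j) = a (Upair i j)" if kl: "i < Suc n" "j < Suc n" for i j
  proof -
    consider "i < n" "j < n" | "i < n" "j = n" | "i = n" "j < n" | "i = n" "j = n"
      using kl by (auto simp: less_Suc_eq)
    then show ?thesis
    proof cases
      case 1
      have "(\<Sum>k<n. G k i * G k j) = (\<Sum>k<n. g k i * g k j)" using 1 by (simp add: Gin)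
      then show ?thesis using 1 gg Gn0 by simp
    next
      case 2
      have "(\<Sum>k<n. G k i * G k j) = (\<Sum>k<n. g k i * c k)" using 2 by (simp add: Gin Gcol)
      then show ?thesis using 2 colc Gn0 by simp
    next
      case 3
      have "(\<Sum>k<n. G k i * G k j) = (\<Sum>k<n. g k j * c k)"
        using 3 by (simp add: Gin Gcol mult.commute)
      moreover have U: "a (Upair n j) = a (Upair j n)" by (metis Upair_inject)
      ultimately show ?thesis using 3 colc[of j] Gn0 by (simp add: U)
    next
      case 4
      have "(\<Sum>k<n. G k i * G k j) = (\<Sum>m<n. (c m)\<^sup>2)" using 4 by (simp add: Gcol power2_eq_square)
      then show ?thesis using 4 Gnn dsq by (simp add: power2_eq_square)
    qed
  qed
  show ?thesis unfolding chinv_def G_def[symmetric] H_def[symmetric]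
    using P1 P2 P3 P4 by blast
qed

lemma chinv_chol:
  assumes "\<And>j. j < n \<Longrightarrow> a (Upair j j) \<noteq> phi j a"
  shows "chinv n a (fst (chol n a)) (snd (chol n a))"
  using assms
proof (induction n)
  case 0
  then show ?case by (simp add: chinv_def delta_def)
next
  case (Suc n)
  have "chinv n a (fst (chol n a)) (snd (chol n a))" using Suc by auto
  moreover have "a (Upair n n) \<noteq> (\<Sum>m<n. (cvec n a (snd (chol n a)) m)\<^sup>2)"
    using Suc.prems[of n] by (simp add: phi_def)
  ultimately show ?case by (simp add: chinv_step)
qed

lemma chol_local:
  "(\<And>i j. i < n \<Longrightarrow> j < n \<Longrightarrow> a (Upair i j) = b (Upair i j)) \<Longrightarrow> chol n a = chol n b"
proof (induction n)
  case 0 then show ?case by simp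
next
  case (Suc n)
  have IH: "chol n a = chol n b" using Suc by auto
  have cv: "cvec n a h = cvec n b h" for h
    unfolding cvec_def using Suc.prems by (intro ext sum.cong) auto
  have dv: "dval n a h = dval n b h" for h
    unfolding dval_def using cv Suc.prems[of n n] by simp
  show ?case unfolding chol.simps IH stepg_def steph_def cv dv ..
qed

lemma phi_local:
  assumes "\<And>i j. i < n \<Longrightarrow> j < n \<Longrightarrow> a (Upair i j) = b (Upair i j)"
    "\<And>k. k < n \<Longrightarrow> a (Upair k n) = b (Upair k n)"
  shows "phi n a = phi n b"
proof -
  have "chol n a = chol n b" by (rule chol_local) (use assms in auto)
  then show ?thesis unfolding phi_def cvec_def using assms(2) by simp
qed

lemma chinv_gl:
  assumes "chinv n a g h" shows "gl_inf g"
  unfolding gl_inf_def using assms unfolding chinv_def by blast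




fun L :: "nat \<Rightarrow> var list" where
  "L 0 = []"
| "L (Suc n) = L n @ map (\<lambda>k. Upair k n) [0..<Suc n]"

lemma set_L: "Upair i j \<in> set (L n) \<longleftrightarrow> i < n \<and> j < n"
proof (induction n arbitrary: i j)
  case 0 then show ?case by simp
next
  case (Suc n)
  show ?case
  proof
    assume "Upair i j \<in> set (L (Suc n))"
    then show "i < Suc n \<and> j < Suc n" using Suc by auto
  next
    assume ij: "i < Suc n \<and> j < Suc n"
    show "Upair i j \<in> set (L (Suc n))"
    proof (cases "i < n \<and> j < n")
      case True then show ?thesis using Suc by simp
    next
      case False
      then have "(i = n \<and> j \<le> n) \<or> (j = n \<and> i \<le> n)" using ij by auto
      then show ?thesis by (auto simp: image_iff)
    qed
  qed
qed

lemma set_L_ex: "v \<in> set (L n) \<Longrightarrow> \<exists>i j. v = Upair i j \<and> i < n \<and> j < n"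
  by (metis set_L uprod_exhaust)

lemma distinct_L: "distinct (L n)"
proof (induction n)
  case 0 then show ?case by simp
next
  case (Suc n)
  have "inj_on (\<lambda>k. Upair k n) {0..<Suc n}" by (auto simp: inj_on_def)
  moreover have "set (L n) \<inter> set (map (\<lambda>k. Upair k n) [0..<Suc n]) = {}"
    using set_L by auto
  moreover have "inj_on (\<lambda>k. Upair k n) {0..<n}" by (auto simp: inj_on_def)
  moreover have "Upair n n \<notin> (\<lambda>k. Upair k n) ` {0..<n}" by auto
  ultimately show ?case using Suc by (simp add: distinct_map)
qed

lemma snoc_split: "xs @ [y] = us @ y # ws \<Longrightarrow> y \<notin> set xs \<Longrightarrow> us = xs"
proof (cases ws rule: rev_exhaust)
  case Nil
  assume "xs @ [y] = us @ y # ws" then show ?thesis using Nil by simp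
next
  case (snoc ws' z)
  assume "xs @ [y] = us @ y # ws" "y \<notin> set xs"
  then have "xs = us @ y # ws'" using snoc by simp
  then show ?thesis using \<open>y \<notin> set xs\<close> by simp
qed

lemma L_prefix: "L n = us @ Upair j j # ws \<Longrightarrow>
   (\<forall>i l. i < j \<and> l < j \<longrightarrow> Upair i l \<in> set us) \<and> (\<forall>k<j. Upair k j \<in> set us)"
proof (induction n arbitrary: us ws)
  case 0 then show ?case by simp
next
  case (Suc n)
  let ?C = "map (\<lambda>k. Upair k n) [0..<Suc n]"
  have "L n @ ?C = us @ Upair j j # ws" using Suc.prems by simp
  then consider us' where "L n = us @ us'" "us' @ ?C = Upair j j # ws"
    | us' where "L n @ us' = us" "?C = us' @ Upair j j # ws"
    by (auto simp: append_eq_append_conv2)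
  then show ?case
  proof cases
    case 1
    show ?thesis
    proof (cases us')
      case Nil
      have c0: "?C ! 0 = Upair j j" using 1 Nil by (metis append.left_neutral nth_Cons_0)
      have "?C ! 0 = Upair 0 n" by (simp only: nth_map length_upt zero_less_Suc diff_zero nth_upt add_0)
      then have "Upair 0 n = Upair j j" using c0 by simp
      then have "j = 0" by auto
      then show ?thesis by simp
    next
      case (Cons x r)
      then have "L n = us @ Upair j j # r" using 1 by simp
      then show ?thesis by (rule Suc.IH)
    qed
  next
    case 2
    have "Upair j j \<in> set ?C" using 2 by simp
    then have jn: "j = n" by auto
    have C: "?C = map (\<lambda>k. Upair k n) [0..<n] @ [Upair n n]" by simp
    have "Upair n n \<notin> set (map (\<lambda>k. Upair k n) [0..<n])" by auto
    then have "us' = map (\<lambda>k. Upair k n) [0..<n]"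
      using 2 C jn by (metis snoc_split)
    then show ?thesis using 2 jn set_L by auto
  qed
qed

definition forb :: "var \<Rightarrow> (var \<Rightarrow> complex) \<Rightarrow> complex set" where
  "forb v a = (\<lambda>j. phi j a) ` {j. v = Upair j j}"

lemma forb_finite: "finite (forb v a)"
proof -
  obtain x y where v: "v = Upair x y" by (cases v)
  have "{j. v = Upair j j} \<subseteq> {x}" using v by auto
  then show ?thesis unfolding forb_def by (meson finite.emptyI finite_imageI finite_insert finite_subset)
qed

lemma forb_dep:
  assumes "L n = us @ v # ws" "\<And>w. w \<in> set us \<Longrightarrow> a w = b w"
  shows "forb v a = forb v b"
proof -
  have "phi j a = phi j b" if "v = Upair j j" for j
  proof (rule phi_local)
    have P: "(\<forall>i l. i < j \<and> l < j \<longrightarrow> Upair i l \<in> set us) \<and> (\<forall>k<j. Upair k j \<in> set us)"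
      using L_prefix assms(1) that by blast
    show "\<And>i l. i < j \<Longrightarrow> l < j \<Longrightarrow> a (Upair i l) = b (Upair i l)" using P assms(2) by blast
    show "\<And>k. k < j \<Longrightarrow> a (Upair k j) = b (Upair k j)" using P assms(2) by blast
  qed
  then show ?thesis unfolding forb_def by (intro image_cong) auto
qed

lemma vars_bound: "\<exists>N. vars p \<subseteq> set (L N)"
proof -
  define S where "S = \<Union>(set_uprod ` vars p)"
  have fS: "finite S" unfolding S_def using finite_vars by simp
  define N where "N = Suc (Max (insert 0 S))"
  have "v \<in> set (L N)" if "v \<in> vars p" for v
  proof -
    obtain i j where v: "v = Upair i j" by (cases v)
    have "i \<in> set_uprod v" "j \<in> set_uprod v" using v by auto
    then have "i \<in> S" "j \<in> S" using that unfolding S_def by auto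
    then have "i < N" "j < N" using fS unfolding N_def by (auto simp: le_imp_less_Suc)
    then show ?thesis using v set_L by simp
  qed
  then show ?thesis by blast
qed

lemma key:
  assumes "p \<noteq> 0"
  shows "\<exists>g. gl_inf g \<and> ev idp (act g p) \<noteq> 0"
proof -
  obtain N where N: "vars p \<subseteq> set (L N)" using vars_bound by blast
  have "\<exists>a. ev a p \<noteq> 0 \<and> (\<forall>v\<in>set (L N). a v \<notin> forb v a)"
  proof (rule git)
    show "distinct (L N)" by (rule distinct_L)
    show "\<And>v a. finite (forb v a)" by (rule forb_finite)
    show "\<And>us v ws a b. L N = us @ v # ws \<Longrightarrow> (\<And>w. w \<in> set us \<Longrightarrow> a w = b w) \<Longrightarrow> forb v a = forb v b"
      by (rule forb_dep)
  qed (use N assms in auto)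
  then obtain a where a: "ev a p \<noteq> 0" "\<forall>v\<in>set (L N). a v \<notin> forb v a" by blast
  have good: "a (Upair j j) \<noteq> phi j a" if "j < N" for j
  proof -
    have "Upair j j \<in> set (L N)" using that set_L by simp
    then have "a (Upair j j) \<notin> forb (Upair j j) a" using a(2) by blast
    then show ?thesis unfolding forb_def by auto
  qed
  define g where "g = fst (chol N a)"
  define h where "h = snd (chol N a)"
  have I: "chinv N a g h" unfolding g_def h_def by (rule chinv_chol) (use good in auto)
  have gl: "gl_inf g" by (rule chinv_gl[OF I])
  have "ev idp (act g p) = ev a p"
  proof (rule ev_act)
    fix i j assume v: "Upair i j \<in> vars p"
    then have ij: "i < N" "j < N" using N set_L by auto
    have col: "{k. g k x \<noteq> 0} \<subseteq> {..<N}" if "x < N" for x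
    proof
      fix k assume "k \<in> {k. g k x \<noteq> 0}"
      then have "g k x \<noteq> 0" by simp
      moreover have "N \<le> k \<Longrightarrow> g k x = delta k x" using I by (auto simp: chinv_def)
      ultimately show "k \<in> {..<N}" using that by (cases "N \<le> k") (auto simp: delta_def)
    qed
    show "{k. g k i \<noteq> 0} \<subseteq> {..<N} \<and> {k. g k j \<noteq> 0} \<subseteq> {..<N}" using col ij by auto
    show "a (Upair i j) = (\<Sum>k<N. g k i * g k j)" using I ij by (auto simp: chinv_def)
  qed
  then show ?thesis using a(1) gl by auto
qed




theorem mainTheorem14:
  fixes I :: "poly set"
  assumes "is_ideal I" and "I \<noteq> {0}" and "GL_stable I"
  shows "{a + b | a b. a \<in> I \<and> b \<in> mm} = UNIV"
proof -
  have "0 \<in> I" using assms(1) by (simp add: is_ideal_def)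
  then obtain f where f: "f \<in> I" "f \<noteq> 0" using assms(2) by blast
  obtain g where g: "gl_inf g" "ev idp (act g f) \<noteq> 0" using key[OF f(2)] by blast
  define F where "F = act g f"
  have FI: "F \<in> I" using assms(3) g(1) f(1) unfolding GL_stable_def F_def by blast
  define c where "c = ev idp F"
  have cnz: "c \<noteq> 0" using g(2) by (simp add: c_def F_def)
  have Fm: "F - const c \<in> mm" using J_all[of F] by (simp add: J_def c_def)
  have "q \<in> {a + b | a b. a \<in> I \<and> b \<in> mm}" for q
  proof -
    define r where "r = q * const (1 / c)"
    have "q = r * F + (- r) * (F - const c)"
    proof -
      have "r * F + (- r) * (F - const c) = q * (const (1/c) * const c)"
        by (simp add: r_def algebra_simps)
      also have "\<dots> = q" using cnz by (simp add: const_mult)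
      finally show ?thesis by simp
    qed
    moreover have "r * F \<in> I" using FI assms(1) by (rule ideal_mult[rotated])
    moreover have "(- r) * (F - const c) \<in> mm" using Fm mm_ideal by (rule ideal_mult[rotated])
    ultimately show ?thesis by blast
  qed
  then show ?thesis by blast
qed


end
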